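(* Let $\mathfrak{U}$ be a Banach algebra such that $\mathfrak{U}^\sharp$ is symmetrically pseudo-amenable. Let $Y$ be a Banach $\mathfrak{U}$-bimodule and $X$ a closed $\mathfrak{U}$-subbimodule of $Y$. If $\delta:\mathfrak{U}\to Y$ is a bounded derivation and $\tau:\mathfrak{U}\to\mathcal{Z}_{\mathfrak{U}}(Y)$ is a linear map such that $(\delta+\tau)(\mathfrak{U})\subseteq X$, then $\delta(\mathfrak{U})\subseteq X$ and $\tau(\mathfrak{U})\subseteq\mathcal{Z}_{\mathfrak{U}}(X)$.
   Context: $\mathfrak{U}^\sharp=\mathfrak{U}\oplus\mathbb{C}1$ is the unitization of $\mathfrak{U}$ with the $\ell^1$-norm (a unit is adjoined even if $\mathfrak{U}$ is unital). For a bimodule $Y$, $\mathcal{Z}_{\mathfrak{U}}(Y)=\{y\in Y: ay=ya \text{ for all } a\in\mathfrak{U}\}$. A derivation is a linear map with $\delta(ab)=\delta(a)b+a\delta(b)$. For a Banach algebra $\mathfrak{A}$, $\mathfrak{A}\widehat{\otimes}\mathfrak{A}$ is the projective tensor product with $a(b\otimes c)=ab\otimes c$, $(b\otimes c)a=b\otimes ca$, $\pi(b\otimes c)=bc$ (extended linearly and continuously); the flip is $(b\otimes c)^\circ=c\otimes b$ and $\mathbf{t}$ is symmetric if $\mathbf{t}^\circ=\mathbf{t}$. A symmetric approximate diagonal is a net $\{\mathbf{t}_\lambda\}$ (not necessarily bounded) of symmetric elements with $a\mathbf{t}_\lambda-\mathbf{t}_\lambda a\to0$ and $\pi(\mathbf{t}_\lambda)a\to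 a$ for all $a\in\mathfrak{A}$; $\mathfrak{A}$ is symmetrically pseudo-amenable if it has one. *)

theory Defs
  imports "HOL-Analysis.Analysis"
begin

class cnormed = real_normed_vector +
  fixes scaleC :: "complex \<Rightarrow> 'a \<Rightarrow> 'a"
  assumes scaleC_add_right: "scaleC c (x + y) = scaleC c x + scaleC c y"
    and scaleC_add_left: "scaleC (c + d) x = scaleC c x + scaleC d x"
    and scaleC_scaleC: "scaleC c (scaleC d x) = scaleC (c * d) x"
    and scaleC_of_real: "scaleC (of_real r) x = scaleR r x"
    and norm_scaleC: "norm (scaleC c x) = cmod c * norm x"

class cnormed_algebra = cnormed + real_normed_algebra +
  assumes mult_scaleC_left: "scaleC c x * y = scaleC c (x * y)"
    and mult_scaleC_right: "x * scaleC c y = scaleC c (x * y)"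

definition clinear_map :: "('a::cnormed \<Rightarrow> 'b::cnormed) \<Rightarrow> bool" where
  "clinear_map f \<longleftrightarrow> (\<forall>x y. f (x + y) = f x + f y) \<and> (\<forall>c x. f (scaleC c x) = scaleC c (f x))"

definition bounded_map :: "('a::real_normed_vector \<Rightarrow> 'b::real_normed_vector) \<Rightarrow> bool" where
  "bounded_map f \<longleftrightarrow> (\<exists>C. \<forall>x. norm (f x) \<le> C * norm x)"

text \<open>A Banach U-bimodule structure on Y (Y itself is assumed complete via its type class):
  left action lm, right action rm, both complex bilinear and jointly bounded,
  with the bimodule associativity laws.\<close>
definition banach_bimodule ::
  "('a::cnormed_algebra \<Rightarrow> 'y::cnormed \<Rightarrow> 'y) \<Rightarrow> ('y \<Rightarrow> 'a \<Rightarrow> 'y) \<Rightarrow> bool" where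
  "banach_bimodule lm rm \<longleftrightarrow>
     (\<forall>a b y. lm (a + b) y = lm a y + lm b y) \<and>
     (\<forall>a y z. lm a (y + z) = lm a y + lm a z) \<and>
     (\<forall>c a y. lm (scaleC c a) y = scaleC c (lm a y)) \<and>
     (\<forall>c a y. lm a (scaleC c y) = scaleC c (lm a y)) \<and>
     (\<forall>a b y. rm y (a + b) = rm y a + rm y b) \<and>
     (\<forall>a y z. rm (y + z) a = rm y a + rm z a) \<and>
     (\<forall>c a y. rm y (scaleC c a) = scaleC c (rm y a)) \<and>
     (\<forall>c a y. rm (scaleC c y) a = scaleC c (rm y a)) \<and>
     (\<forall>a b y. lm (a * b) y = lm a (lm b y)) \<and>
     (\<forall>a b y. rm y (a * b) = rm (rm y a) b) \<and>
     (\<forall>a b y. rm (lm a y) b = lm a (rm y b)) \<and>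
     (\<exists>K. \<forall>a y. norm (lm a y) \<le> K * norm a * norm y) \<and>
     (\<exists>K. \<forall>a y. norm (rm y a) \<le> K * norm a * norm y)"

definition closed_subbimodule ::
  "('a::cnormed_algebra \<Rightarrow> 'y::cnormed \<Rightarrow> 'y) \<Rightarrow> ('y \<Rightarrow> 'a \<Rightarrow> 'y) \<Rightarrow> 'y set \<Rightarrow> bool" where
  "closed_subbimodule lm rm X \<longleftrightarrow>
     0 \<in> X \<and> (\<forall>x\<in>X. \<forall>y\<in>X. x + y \<in> X) \<and> (\<forall>c. \<forall>x\<in>X. scaleC c x \<in> X) \<and>
     closed X \<and> (\<forall>a. \<forall>x\<in>X. lm a x \<in> X \<and> rm x a \<in> X)"

definition zcenter ::
  "('a \<Rightarrow> 'y \<Rightarrow> 'y) \<Rightarrow> ('y \<Rightarrow> 'a \<Rightarrow> 'y) \<Rightarrow> 'y set \<Rightarrow> 'y set" where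
  "zcenter lm rm S = {y \<in> S. \<forall>a. lm a y = rm y a}"

definition derivation ::
  "('a::cnormed_algebra \<Rightarrow> 'y::cnormed \<Rightarrow> 'y) \<Rightarrow> ('y \<Rightarrow> 'a \<Rightarrow> 'y) \<Rightarrow> ('a \<Rightarrow> 'y) \<Rightarrow> bool" where
  "derivation lm rm d \<longleftrightarrow> clinear_map d \<and> (\<forall>a b. d (a * b) = rm (d a) b + lm a (d b))"

text \<open>Elements of U# are pairs (a, alpha) standing for a + alpha 1; addition is componentwise.\<close>
definition us_mult :: "'a::cnormed_algebra \<times> complex \<Rightarrow> 'a \<times> complex \<Rightarrow> 'a \<times> complex" where
  "us_mult x y = (fst x * fst y + scaleC (snd x) (fst y) + scaleC (snd y) (fst x), snd x * snd y)"

definition us_scale :: "complex \<Rightarrow> 'a::cnormed_algebra \<times> complex \<Rightarrow> 'a \<times> complex" where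
  "us_scale c x = (scaleC c (fst x), c * snd x)"

definition us_norm :: "'a::cnormed_algebra \<times> complex \<Rightarrow> real" where
  "us_norm x = norm (fst x) + cmod (snd x)"

text \<open>Finite tensors are lists of elementary tensors [(b1,c1),...] meaning sum bi \<otimes> ci.
  Two finite tensors are equal in the algebraic tensor product iff every complex
  bilinear functional takes the same value on them (universal property).\<close>
definition us_cbilinear :: "('a::cnormed_algebra \<times> complex \<Rightarrow> 'a \<times> complex \<Rightarrow> complex) \<Rightarrow> bool" where
  "us_cbilinear \<phi> \<longleftrightarrow>
     (\<forall>x y z. \<phi> (x + y) z = \<phi> x z + \<phi> y z) \<and>
     (\<forall>x y z. \<phi> z (x + y) = \<phi> z x + \<phi> z y) \<and>
     (\<forall>c x z. \<phi> (us_scale c x) z = c * \<phi> x z) \<and>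
     (\<forall>c x z. \<phi> z (us_scale c x) = c * \<phi> z x)"

definition us_tens_eq ::
  "(('a::cnormed_algebra \<times> complex) \<times> ('a \<times> complex)) list \<Rightarrow> (('a \<times> complex) \<times> ('a \<times> complex)) list \<Rightarrow> bool" where
  "us_tens_eq xs ys \<longleftrightarrow>
     (\<forall>\<phi>. us_cbilinear \<phi> \<longrightarrow> sum_list (map (\<lambda>(b, c). \<phi> b c) xs) = sum_list (map (\<lambda>(b, c). \<phi> b c) ys))"

definition us_pnorm_fin :: "(('a::cnormed_algebra \<times> complex) \<times> ('a \<times> complex)) list \<Rightarrow> real" where
  "us_pnorm_fin xs = Inf {sum_list (map (\<lambda>(b, c). us_norm b * us_norm c) ys) | ys. us_tens_eq xs ys}"

text \<open>Elements of the completed projective tensor product are represented by sequences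
  t n = (b_n, c_n) with sum ||b_n|| ||c_n|| < \<infinity>, standing for sum b_n \<otimes> c_n.\<close>
definition us_tensor_rep :: "(nat \<Rightarrow> ('a::cnormed_algebra \<times> complex) \<times> ('a \<times> complex)) \<Rightarrow> bool" where
  "us_tensor_rep t \<longleftrightarrow> summable (\<lambda>n. us_norm (fst (t n)) * us_norm (snd (t n)))"

definition us_pnorm_lim :: "(nat \<Rightarrow> (('a::cnormed_algebra \<times> complex) \<times> ('a \<times> complex)) list) \<Rightarrow> real" where
  "us_pnorm_lim L = lim (\<lambda>N. us_pnorm_fin (L N))"

definition us_partial :: "(nat \<Rightarrow> ('a \<times> complex) \<times> ('a \<times> complex)) \<Rightarrow> nat \<Rightarrow> (('a \<times> complex) \<times> ('a \<times> complex)) list" where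
  "us_partial t N = map t [0..<N]"

text \<open>|| a t - t a ||_\<pi>\<close>
definition us_comm_norm :: "'a::cnormed_algebra \<times> complex \<Rightarrow> (nat \<Rightarrow> ('a \<times> complex) \<times> ('a \<times> complex)) \<Rightarrow> real" where
  "us_comm_norm a t = us_pnorm_lim (\<lambda>N.
      map (\<lambda>(b, c). (us_mult a b, c)) (us_partial t N) @ map (\<lambda>(b, c). (- b, us_mult c a)) (us_partial t N))"

text \<open>|| t - t\<degree> ||_\<pi>  (t is symmetric iff this is 0)\<close>
definition us_flip_norm :: "(nat \<Rightarrow> ('a::cnormed_algebra \<times> complex) \<times> ('a \<times> complex)) \<Rightarrow> real" where
  "us_flip_norm t = us_pnorm_lim (\<lambda>N. us_partial t N @ map (\<lambda>(b, c). (- c, b)) (us_partial t N))"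

definition us_symmetric :: "(nat \<Rightarrow> ('a::cnormed_algebra \<times> complex) \<times> ('a \<times> complex)) \<Rightarrow> bool" where
  "us_symmetric t \<longleftrightarrow> us_flip_norm t = 0"

definition us_pi :: "(nat \<Rightarrow> ('a::cnormed_algebra \<times> complex) \<times> ('a \<times> complex)) \<Rightarrow> 'a \<times> complex" where
  "us_pi t = (\<Sum>n. us_mult (fst (t n)) (snd (t n)))"

text \<open>A symmetric approximate diagonal for U#, as a net (filter F on an index type, t i
  the element at index i).\<close>
definition us_sym_approx_diag :: "'i filter \<Rightarrow> ('i \<Rightarrow> nat \<Rightarrow> ('a::cnormed_algebra \<times> complex) \<times> ('a \<times> complex)) \<Rightarrow> bool" where
  "us_sym_approx_diag F t \<longleftrightarrow>
     F \<noteq> bot \<and>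
     (\<forall>i. us_tensor_rep (t i) \<and> us_symmetric (t i)) \<and>
     (\<forall>a. ((\<lambda>i. us_comm_norm a (t i)) \<longlongrightarrow> 0) F) \<and>
     (\<forall>a. ((\<lambda>i. us_norm (us_mult (us_pi (t i)) a - a)) \<longlongrightarrow> 0) F)"

end

theory Submission
  imports Defs
begin


lemma scaleC_one[simp]: "scaleC 1 (x::'a::cnormed) = x"
  using scaleC_of_real[of 1 x] by simp
lemma scaleC_zero_left[simp]: "scaleC 0 (x::'a::cnormed) = 0"
  using scaleC_of_real[of 0 x] by simp
lemma scaleC_zero_right[simp]: "scaleC c (0::'a::cnormed) = 0"
proof -
  have "scaleC c 0 + scaleC c 0 = scaleC c 0 + (0::'a)"
    using scaleC_add_right[of c 0 0] by (simp only: add_0_left add_0_right) (rule sym)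
  then show ?thesis by (simp only: add_left_cancel)
qed
lemma scaleC_minus_right: "scaleC c (- x::'a::cnormed) = - scaleC c x"
proof -
  have "scaleC c x + scaleC c (-x) = scaleC c (x + - x)" by (rule scaleC_add_right[symmetric])
  also have "\<dots> = 0" by simp
  finally show ?thesis by (rule minus_unique[symmetric])
qed
lemma scaleC_minus_left: "scaleC (- c) (x::'a::cnormed) = - scaleC c x"
proof -
  have "scaleC c x + scaleC (-c) x = scaleC (c + - c) x" by (rule scaleC_add_left[symmetric])
  also have "\<dots> = 0" by simp
  finally show ?thesis by (rule minus_unique[symmetric])
qed
lemma scaleC_diff_right: "scaleC c (x - y::'a::cnormed) = scaleC c x - scaleC c y"
  by (simp only: diff_conv_add_uminus scaleC_add_right scaleC_minus_right)
lemma scaleC_minus1: "scaleC (-1) (x::'a::cnormed) = - x"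
  using scaleC_minus_left[of 1 x] by (simp only: scaleC_one)
lemma half_half: "(1/2 + 1/2 :: complex) = 1" by simp
lemma scaleC_half: "scaleC (1/2) (x + x::'a::cnormed) = x"
proof -
  have "scaleC (1/2) (x + x) = scaleC (1/2) x + scaleC (1/2) x"
    by (rule scaleC_add_right)
  also have "\<dots> = scaleC (1/2 + 1/2) x"
    by (rule scaleC_add_left[symmetric])
  also have "\<dots> = x" by (simp only: half_half scaleC_one)
  finally show ?thesis .
qed

lemma exists_functional:
  fixes v :: "'y::cnormed"
  assumes "v \<noteq> 0"
  shows "\<exists>l::'y \<Rightarrow> complex. (\<forall>x y. l (x + y) = l x + l y) \<and> (\<forall>c x. l (scaleC c x) = c * l x) \<and> l v = 1"
proof -
  interpret V: vector_space "scaleC :: complex \<Rightarrow> 'y \<Rightarrow> 'y"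
    by unfold_locales (auto simp: scaleC_add_right scaleC_add_left scaleC_scaleC)
  interpret C: vector_space "(*) :: complex \<Rightarrow> complex \<Rightarrow> complex"
    by unfold_locales (auto simp: algebra_simps)
  interpret P: vector_space_pair "scaleC :: complex \<Rightarrow> 'y \<Rightarrow> 'y" "(*) :: complex \<Rightarrow> complex \<Rightarrow> complex"
    by unfold_locales
  have "V.independent {v}" using assms by simp
  from P.linear_independent_extend[OF this, of "\<lambda>_. 1"]
  obtain g where g: "Vector_Spaces.linear scaleC (*) g" "g v = 1" by auto
  then interpret G: Vector_Spaces.linear "scaleC :: complex \<Rightarrow> 'y \<Rightarrow> 'y" "(*) :: complex \<Rightarrow> complex \<Rightarrow> complex" g by simp
  show ?thesis using g by (intro exI[of _ g]) (auto simp: G.add G.scale)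
qed

definition tval :: "('b \<Rightarrow> 'c \<Rightarrow> 'd::comm_monoid_add) \<Rightarrow> ('b \<times> 'c) list \<Rightarrow> 'd" where
  "tval h xs = sum_list (map (\<lambda>(b, c). h b c) xs)"

definition tS :: "(('a::cnormed_algebra \<times> complex) \<times> ('a \<times> complex)) list \<Rightarrow> real" where
  "tS xs = tval (\<lambda>b c. us_norm b * us_norm c) xs"

definition negl :: "(('a::cnormed_algebra \<times> complex) \<times> ('a \<times> complex)) list \<Rightarrow> _" where
  "negl xs = map (\<lambda>(b, c). (- b, c)) xs"

lemma tval_append[simp]: "tval h (xs @ ys) = tval h xs + tval h ys"
  by (simp add: tval_def)
lemma tval_Nil[simp]: "tval h [] = 0" by (simp add: tval_def)
lemma tval_Cons[simp]: "tval h (x # xs) = h (fst x) (snd x) + tval h xs" by (simp add: tval_def split_beta)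

lemma tens_eq_iff: "us_tens_eq xs ys \<longleftrightarrow> (\<forall>\<phi>. us_cbilinear \<phi> \<longrightarrow> tval \<phi> xs = tval \<phi> ys)"
  by (simp add: us_tens_eq_def tval_def)

lemma us_norm_nonneg: "0 \<le> us_norm x" by (simp add: us_norm_def)
lemma us_norm_minus[simp]: "us_norm (- x) = us_norm x"
  by (simp add: us_norm_def)

lemma tS_nonneg: "0 \<le> tS xs"
  unfolding tS_def by (induction xs) (auto intro!: add_nonneg_nonneg mult_nonneg_nonneg us_norm_nonneg)

lemma tS_append[simp]: "tS (xs @ ys) = tS xs + tS ys" by (simp add: tS_def)

lemma tS_negl[simp]: "tS (negl xs) = tS xs"
  unfolding tS_def negl_def by (induction xs) (auto simp: split_beta)

lemma cbil_neg: "us_cbilinear \<phi> \<Longrightarrow> \<phi> (- b) c = - \<phi> b c"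
proof -
  assume a: "us_cbilinear \<phi>"
  have "- b = us_scale (-1) b" by (simp add: us_scale_def scaleC_minus1 prod_eq_iff)
  moreover have "\<phi> (us_scale (-1) b) c = (-1) * \<phi> b c" using a unfolding us_cbilinear_def by blast
  ultimately show ?thesis by simp
qed

lemma tval_negl: "us_cbilinear \<phi> \<Longrightarrow> tval \<phi> (negl xs) = - tval \<phi> xs"
  unfolding negl_def by (induction xs) (auto simp: cbil_neg split_beta)

definition pset :: "(('a::cnormed_algebra \<times> complex) \<times> ('a \<times> complex)) list \<Rightarrow> real set" where
  "pset xs = {tS ys | ys. us_tens_eq xs ys}"

lemma pnorm_pset: "us_pnorm_fin xs = Inf (pset xs)"
  by (simp add: us_pnorm_fin_def pset_def tS_def tval_def)

lemma pset_ne: "tS xs \<in> pset xs"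
  by (auto simp: pset_def us_tens_eq_def)
lemma pset_bdd: "bdd_below (pset xs)"
  by (auto simp: pset_def intro!: bdd_belowI[of _ 0] tS_nonneg)

lemma pn_le: "us_pnorm_fin xs \<le> tS xs"
  unfolding pnorm_pset by (rule cInf_lower[OF pset_ne pset_bdd])

lemma pn_greatest: "(\<And>ys. us_tens_eq xs ys \<Longrightarrow> m \<le> tS ys) \<Longrightarrow> m \<le> us_pnorm_fin xs"
  unfolding pnorm_pset by (rule cInf_greatest) (use pset_ne in \<open>auto simp: pset_def\<close>)

lemma pn_nonneg: "0 \<le> us_pnorm_fin xs"
  by (rule pn_greatest) (rule tS_nonneg)

lemma tens_eq_sym: "us_tens_eq xs ys \<Longrightarrow> us_tens_eq ys xs"
  unfolding us_tens_eq_def by simp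
lemma tens_eq_trans: "us_tens_eq xs ys \<Longrightarrow> us_tens_eq ys zs \<Longrightarrow> us_tens_eq xs zs"
  unfolding us_tens_eq_def by simp

lemma pset_sub: "us_tens_eq xs ys \<Longrightarrow> pset ys \<subseteq> pset xs"
  unfolding pset_def using tens_eq_trans by blast

lemma pn_eq: "us_tens_eq xs ys \<Longrightarrow> us_pnorm_fin xs = us_pnorm_fin ys"
proof -
  assume a: "us_tens_eq xs ys"
  have "pset xs = pset ys"
    using pset_sub[OF a] pset_sub[OF tens_eq_sym[OF a]] by (rule subset_antisym[rotated])
  then show ?thesis by (simp add: pnorm_pset)
qed

lemma pn_append: "us_pnorm_fin (xs @ ys) \<le> us_pnorm_fin xs + us_pnorm_fin ys"
proof -
  have *: "us_pnorm_fin (xs @ ys) \<le> tS xs' + tS ys'" if "us_tens_eq xs xs'" "us_tens_eq ys ys'" for xs' ys'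
  proof -
    have "us_tens_eq (xs @ ys) (xs' @ ys')" using that by (simp add: tens_eq_iff)
    then have "us_pnorm_fin (xs @ ys) = us_pnorm_fin (xs' @ ys')" by (rule pn_eq)
    also have "\<dots> \<le> tS (xs' @ ys')" by (rule pn_le)
    finally show ?thesis by simp
  qed
  have "us_pnorm_fin (xs @ ys) - tS ys' \<le> us_pnorm_fin xs" if "us_tens_eq ys ys'" for ys'
    by (rule pn_greatest) (use * that in force)
  then have "us_pnorm_fin (xs @ ys) - us_pnorm_fin xs \<le> us_pnorm_fin ys"
    by (intro pn_greatest) force
  then show ?thesis by simp
qed

lemma tval_concat_gen: "tval h (concat xss) = sum_list (map (tval h) xss)"
  by (induction xss) (simp_all add: tval_def)

lemma tval_concat: "tval h (concat (map g [N..<M])) = (\<Sum>n\<in>{N..<M}. tval h (g n))"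
proof -
  have "tval h (concat (map g [N..<M])) = sum_list (map (\<lambda>n. tval h (g n)) [N..<M])"
    by (simp add: tval_concat_gen o_def)
  also have "\<dots> = (\<Sum>n\<in>{N..<M}. tval h (g n))"
    by (subst sum_set_upt_conv_sum_list_nat[symmetric]) simp
  finally show ?thesis .
qed

lemma tS_concat: "tS (concat (map g [N..<M])) = (\<Sum>n\<in>{N..<M}. tS (g n))"
  unfolding tS_def by (rule tval_concat)

lemma pn_diff_bound:
  fixes L g :: "nat \<Rightarrow> (('a::cnormed_algebra \<times> complex) \<times> ('a \<times> complex)) list" and N M :: nat
  assumes L: "\<And>\<phi> N. us_cbilinear \<phi> \<Longrightarrow> tval \<phi> (L N) = (\<Sum>n<N. tval \<phi> (g n))"
    and NM: "N \<le> M"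
  shows "\<bar>us_pnorm_fin (L M) - us_pnorm_fin (L N)\<bar> \<le> (\<Sum>n\<in>{N..<M}. tS (g n))"
proof -
  define R where "R = concat (map g [N..<M])"
  have sp: "tval \<phi> (L M) = tval \<phi> (L N) + tval \<phi> R" if "us_cbilinear \<phi>" for \<phi>
  proof -
    have "tval \<phi> (L M) = (\<Sum>n\<in>{0..<M}. tval \<phi> (g n))" using L[OF that] by (simp add: atLeast0LessThan)
    also have "\<dots> = (\<Sum>n\<in>{0..<N}. tval \<phi> (g n)) + (\<Sum>n\<in>{N..<M}. tval \<phi> (g n))"
      using NM by (intro sum.atLeastLessThan_concat[symmetric]) auto
    also have "\<dots> = tval \<phi> (L N) + tval \<phi> R"
      using L[OF that] by (simp only: R_def tval_concat atLeast0LessThan)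
    finally show ?thesis .
  qed
  have e1: "us_tens_eq (L M) (L N @ R)"
    unfolding tens_eq_iff
  proof (intro allI impI)
    fix \<phi> :: "'a \<times> complex \<Rightarrow> 'a \<times> complex \<Rightarrow> complex" assume "us_cbilinear \<phi>"
    then show "tval \<phi> (L M) = tval \<phi> (L N @ R)" using sp by (simp only: tval_append)
  qed
  have e2: "us_tens_eq (L N) (L M @ negl R)"
    unfolding tens_eq_iff
  proof (intro allI impI)
    fix \<phi> :: "'a \<times> complex \<Rightarrow> 'a \<times> complex \<Rightarrow> complex" assume b: "us_cbilinear \<phi>"
    then show "tval \<phi> (L N) = tval \<phi> (L M @ negl R)" using sp[OF b] tval_negl[OF b, of R]
      by (simp only: tval_append) simp
  qed
  have 1: "us_pnorm_fin (L M) \<le> us_pnorm_fin (L N) + tS R"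
    using pn_eq[OF e1] pn_append[of "L N" R] pn_le[of R] by linarith
  have 2: "us_pnorm_fin (L N) \<le> us_pnorm_fin (L M) + tS R"
    using pn_eq[OF e2] pn_append[of "L M" "negl R"] pn_le[of "negl R"] tS_negl[of R] by linarith
  have 3: "tS R = (\<Sum>n\<in>{N..<M}. tS (g n))" by (simp only: R_def tS_concat)
  show ?thesis using 1 2 3 by linarith
qed

lemma pn_convergent:
  fixes L g :: "nat \<Rightarrow> (('a::cnormed_algebra \<times> complex) \<times> ('a \<times> complex)) list"
  assumes L: "\<And>\<phi> N. us_cbilinear \<phi> \<Longrightarrow> tval \<phi> (L N) = (\<Sum>n<N. tval \<phi> (g n))"
    and sm: "summable (\<lambda>n. tS (g n))"
  shows "convergent (\<lambda>N. us_pnorm_fin (L N))"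
proof -
  define P where "P = (\<lambda>N. us_pnorm_fin (L N))"
  have "Cauchy P"
  proof (rule CauchyI)
    fix e :: real assume "0 < e"
    with sm obtain K where K: "\<And>m n. m \<ge> K \<Longrightarrow> norm (\<Sum>n\<in>{m..<n}. tS (g n)) < e"
      unfolding summable_Cauchy by blast
    have b: "\<bar>P M - P N\<bar> < e" if "K \<le> N" "N \<le> M" for N M
    proof -
      have 1: "\<bar>P M - P N\<bar> \<le> (\<Sum>n\<in>{N..<M}. tS (g n))"
        unfolding P_def using pn_diff_bound[OF L that(2)] by simp
      have 2: "(\<Sum>n\<in>{N..<M}. tS (g n)) \<le> norm (\<Sum>n\<in>{N..<M}. tS (g n))"
        unfolding real_norm_def by (rule abs_ge_self)
      show ?thesis using 1 2 K[OF that(1), of M] by linarith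
    qed
    show "\<exists>M. \<forall>m\<ge>M. \<forall>n\<ge>M. norm (P m - P n) < e"
    proof (intro exI allI impI)
      fix m n assume m: "K \<le> m" and n: "K \<le> n"
      have c: "\<bar>P m - P n\<bar> = \<bar>P n - P m\<bar>" by (rule abs_minus_commute)
      show "norm (P m - P n) < e"
      proof (cases "m \<le> n")
        case True
        then show ?thesis using b[OF m True] c unfolding real_norm_def by linarith
      next
        case False
        then have "n \<le> m" by simp
        then show ?thesis using b[OF n] unfolding real_norm_def by blast
      qed
    qed
  qed
  then have "convergent P" by (simp only: Cauchy_convergent_iff)
  then show ?thesis by (simp only: P_def)
qed

lemma tval_map_partial: "tval h (map p (us_partial t N)) = (\<Sum>n<N. tval h [p (t n)])"
proof (induction N)
  case 0 then show ?case by (simp add: us_partial_def)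
next
  case (Suc N)
  have "us_partial t (Suc N) = us_partial t N @ [t N]" by (simp add: us_partial_def)
  then have "tval h (map p (us_partial t (Suc N))) = tval h (map p (us_partial t N)) + tval h [p (t N)]"
    by (simp only: map_append tval_append list.map)
  then show ?case using Suc by (simp only: sum.lessThan_Suc)
qed

lemma tval_two_maps:
  "tval h (map p (us_partial t N) @ map q (us_partial t N)) = (\<Sum>n<N. tval h [p (t n), q (t n)])"
proof -
  have "tval h (map p (us_partial t N) @ map q (us_partial t N))
      = (\<Sum>n<N. tval h [p (t n)] + tval h [q (t n)])"
    by (simp only: tval_append tval_map_partial sum.distrib)
  also have "\<dots> = (\<Sum>n<N. tval h [p (t n), q (t n)])"
    by (intro sum.cong refl) simp
  finally show ?thesis .
qed

lemma lip_tendsto: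
  fixes f :: "'a::real_normed_vector \<Rightarrow> 'b::real_normed_vector"
  assumes lip: "\<And>x y. norm (f x - f y) \<le> B * norm (x - y)" and g: "(g \<longlongrightarrow> l) F"
  shows "((\<lambda>i. f (g i)) \<longlongrightarrow> f l) F"
proof -
  have g0: "((\<lambda>i. g i - l) \<longlongrightarrow> 0) F" using Lim_null[THEN iffD1, OF g] .
  have "((\<lambda>i. norm (g i - l)) \<longlongrightarrow> 0) F" using tendsto_norm_zero[OF g0] .
  from tendsto_mult[OF tendsto_const this, of B]
  have b: "((\<lambda>i. B * norm (g i - l)) \<longlongrightarrow> 0) F" by (simp only: mult_zero_right)
  have "((\<lambda>i. f (g i) - f l) \<longlongrightarrow> 0) F"
    by (rule Lim_null_comparison[OF always_eventually b]) (intro allI lip)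
  then show ?thesis by (rule Lim_null[THEN iffD2])
qed

lemma us_norm_le: "us_norm x \<le> 2 * norm x"
  using norm_fst_le[of "fst x" "snd x"] norm_snd_le[of "snd x" "fst x"]
  by (simp add: us_norm_def)

lemma norm_le_us_norm: "norm x \<le> us_norm x"
proof -
  have "norm x = norm (fst x, snd x)" by simp
  also have "\<dots> \<le> norm (fst x) + norm (snd x)"
    by (metis norm_Pair_le)
  finally show ?thesis by (simp add: us_norm_def)
qed

lemma us_norm_mult: "us_norm (us_mult x y) \<le> us_norm x * us_norm y"
proof -
  obtain a \<alpha> b \<beta> where x: "x = (a, \<alpha>)" and y: "y = (b, \<beta>)" by (cases x, cases y)
  have n1: "norm (a * b + scaleC \<alpha> b + scaleC \<beta> a) \<le> norm (a * b) + norm (scaleC \<alpha> b) + norm (scaleC \<beta> a)"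
    using norm_triangle_ineq[of "a * b + scaleC \<alpha> b" "scaleC \<beta> a"] norm_triangle_ineq[of "a * b" "scaleC \<alpha> b"]
    by linarith
  have n2: "norm (a * b) \<le> norm a * norm b" by (rule norm_mult_ineq)
  have e: "(norm a + cmod \<alpha>) * (norm b + cmod \<beta>) = norm a * norm b + cmod \<alpha> * norm b + cmod \<beta> * norm a + cmod \<alpha> * cmod \<beta>"
    by (simp add: algebra_simps)
  have "us_norm (us_mult x y) = norm (a * b + scaleC \<alpha> b + scaleC \<beta> a) + cmod \<alpha> * cmod \<beta>"
    by (simp add: x y us_mult_def us_norm_def norm_mult)
  also have "\<dots> \<le> (norm a + cmod \<alpha>) * (norm b + cmod \<beta>)"
    using n1 n2 e by (simp add: norm_scaleC)
  finally show ?thesis by (simp add: x y us_norm_def)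
qed

lemma my_comparison:
  fixes f :: "nat \<Rightarrow> 'a::{real_normed_vector, complete_space}"
  assumes g: "summable g" and le: "\<And>n. norm (f n) \<le> g n"
  shows "summable f"
proof -
  have "Cauchy (\<lambda>n. \<Sum>i<n. f i)"
  proof (rule CauchyI)
    fix e :: real assume "0 < e"
    with g obtain N where N: "\<And>m n. m \<ge> N \<Longrightarrow> norm (sum g {m..<n}) < e"
      unfolding summable_Cauchy by blast
    have b: "norm ((\<Sum>i<n. f i) - (\<Sum>i<m. f i)) < e" if "N \<le> m" "m \<le> n" for m n
    proof -
      have "(\<Sum>i<n. f i) - (\<Sum>i<m. f i) = sum f {m..<n}"
        using sum_diff_nat_ivl[of 0 m n f] that(2) by (simp add: atLeast0LessThan)
      then have "norm ((\<Sum>i<n. f i) - (\<Sum>i<m. f i)) = norm (sum f {m..<n})" by simp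
      also have "\<dots> \<le> sum g {m..<n}" by (rule sum_norm_le) (rule le)
      also have "sum g {m..<n} \<le> norm (sum g {m..<n})" by simp
      also have "\<dots> < e" by (rule N[OF that(1)])
      finally show ?thesis .
    qed
    show "\<exists>M. \<forall>m\<ge>M. \<forall>n\<ge>M. norm ((\<Sum>i<m. f i) - (\<Sum>i<n. f i)) < e"
    proof (intro exI allI impI)
      fix m n assume m: "N \<le> m" and n: "N \<le> n"
      show "norm ((\<Sum>i<m. f i) - (\<Sum>i<n. f i)) < e"
      proof (cases "m \<le> n")
        case True then show ?thesis using b[OF m True] by (simp add: norm_minus_commute)
      next
        case False then show ?thesis using b[OF n, of m] by simp
      qed
    qed
  qed
  then show ?thesis by (simp add: summable_iff_convergent Cauchy_convergent_iff)
qed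




locale L6 =
  fixes lm :: "'a::{cnormed_algebra,complete_space} \<Rightarrow> 'y::{cnormed,complete_space} \<Rightarrow> 'y"
    and rm :: "'y \<Rightarrow> 'a \<Rightarrow> 'y" and X :: "'y set" and \<delta> \<tau> :: "'a \<Rightarrow> 'y"
  assumes bimod: "banach_bimodule lm rm" and sub: "closed_subbimodule lm rm X"
    and der: "derivation lm rm \<delta>" and bdd: "bounded_map \<delta>"
    and lin: "clinear_map \<tau>" and cent: "\<forall>a. \<tau> a \<in> zcenter lm rm UNIV"
    and sumX: "\<forall>a. \<delta> a + \<tau> a \<in> X"
begin

lemmas bm = bimod[unfolded banach_bimodule_def]
lemma lm_addL: "lm (a + b) y = lm a y + lm b y"
  using conjunct1[OF bm] by simp
lemma lm_addR: "lm a (y + z) = lm a y + lm a z"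
  using conjunct1[OF conjunct2[OF bm]] by simp
lemma lm_scL: "lm (scaleC c a) y = scaleC c (lm a y)"
  using conjunct1[OF conjunct2[OF conjunct2[OF bm]]] by simp
lemma lm_scR: "lm a (scaleC c y) = scaleC c (lm a y)"
  using conjunct1[OF conjunct2[OF conjunct2[OF conjunct2[OF bm]]]] by simp
lemma rm_addR: "rm y (a + b) = rm y a + rm y b"
  using conjunct1[OF conjunct2[OF conjunct2[OF conjunct2[OF conjunct2[OF bm]]]]] by simp
lemma rm_addL: "rm (y + z) a = rm y a + rm z a"
  using conjunct1[OF conjunct2[OF conjunct2[OF conjunct2[OF conjunct2[OF conjunct2[OF bm]]]]]] by simp
lemma rm_scR: "rm y (scaleC c a) = scaleC c (rm y a)"
  using conjunct1[OF conjunct2[OF conjunct2[OF conjunct2[OF conjunct2[OF conjunct2[OF conjunct2[OF bm]]]]]]] by simp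
lemma rm_scL: "rm (scaleC c y) a = scaleC c (rm y a)"
  using conjunct1[OF conjunct2[OF conjunct2[OF conjunct2[OF conjunct2[OF conjunct2[OF conjunct2[OF conjunct2[OF bm]]]]]]]] by simp
lemma lm_mult: "lm (a * b) y = lm a (lm b y)"
  using conjunct1[OF conjunct2[OF conjunct2[OF conjunct2[OF conjunct2[OF conjunct2[OF conjunct2[OF conjunct2[OF conjunct2[OF bm]]]]]]]]] by simp
lemma rm_mult: "rm y (a * b) = rm (rm y a) b"
  using conjunct1[OF conjunct2[OF conjunct2[OF conjunct2[OF conjunct2[OF conjunct2[OF conjunct2[OF conjunct2[OF conjunct2[OF conjunct2[OF bm]]]]]]]]]] by simp
lemma lr_assoc: "rm (lm a y) b = lm a (rm y b)"
  using conjunct1[OF conjunct2[OF conjunct2[OF conjunct2[OF conjunct2[OF conjunct2[OF conjunct2[OF conjunct2[OF conjunct2[OF conjunct2[OF conjunct2[OF bm]]]]]]]]]]] by simp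
lemma lm_bound: "\<exists>K. \<forall>a y. norm (lm a y) \<le> K * norm a * norm y"
  using conjunct1[OF conjunct2[OF conjunct2[OF conjunct2[OF conjunct2[OF conjunct2[OF conjunct2[OF conjunct2[OF conjunct2[OF conjunct2[OF conjunct2[OF conjunct2[OF bm]]]]]]]]]]]] .
lemma rm_bound: "\<exists>K. \<forall>a y. norm (rm y a) \<le> K * norm a * norm y"
  using conjunct2[OF conjunct2[OF conjunct2[OF conjunct2[OF conjunct2[OF conjunct2[OF conjunct2[OF conjunct2[OF conjunct2[OF conjunct2[OF conjunct2[OF conjunct2[OF bm]]]]]]]]]]]] .

lemma d_add: "\<delta> (a + b) = \<delta> a + \<delta> b" using der unfolding derivation_def clinear_map_def by blast
lemma d_sc: "\<delta> (scaleC c a) = scaleC c (\<delta> a)" using der unfolding derivation_def clinear_map_def by blast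
lemma d_mult: "\<delta> (a * b) = rm (\<delta> a) b + lm a (\<delta> b)" using der unfolding derivation_def by blast
lemma t_add: "\<tau> (a + b) = \<tau> a + \<tau> b" using lin unfolding clinear_map_def by blast
lemma t_cent: "lm a (\<tau> b) = rm (\<tau> b) a" using cent unfolding zcenter_def by blast

lemma add_lmR: "Modules.additive (lm a)" by (rule Modules.additive.intro) (rule lm_addR)
lemma add_lmL: "Modules.additive (\<lambda>a. lm a y)" by (rule Modules.additive.intro) (rule lm_addL)
lemma add_rmR: "Modules.additive (\<lambda>a. rm y a)" by (rule Modules.additive.intro) (rule rm_addR)
lemma add_rmL: "Modules.additive (\<lambda>y. rm y a)" by (rule Modules.additive.intro) (rule rm_addL)
lemma add_d: "Modules.additive \<delta>" by (rule Modules.additive.intro) (rule d_add)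

lemma lm_0R[simp]: "lm a 0 = 0" using Modules.additive.zero[OF add_lmR] .
lemma lm_0L[simp]: "lm 0 y = 0" using Modules.additive.zero[OF add_lmL] .
lemma rm_0R[simp]: "rm y 0 = 0" using Modules.additive.zero[OF add_rmR] .
lemma rm_0L[simp]: "rm 0 a = 0" using Modules.additive.zero[OF add_rmL] .
lemma lm_negR: "lm a (- y) = - lm a y" using Modules.additive.minus[OF add_lmR] .
lemma lm_negL: "lm (- a) y = - lm a y" using Modules.additive.minus[OF add_lmL] .
lemma rm_negR: "rm y (- a) = - rm y a" using Modules.additive.minus[OF add_rmR] .
lemma rm_negL: "rm (- y) a = - rm y a" using Modules.additive.minus[OF add_rmL] .
lemma d_neg: "\<delta> (- a) = - \<delta> a" using Modules.additive.minus[OF add_d] .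

lemma X0: "0 \<in> X" using sub unfolding closed_subbimodule_def by blast
lemma X_add: "x \<in> X \<Longrightarrow> y \<in> X \<Longrightarrow> x + y \<in> X" using sub unfolding closed_subbimodule_def by blast
lemma X_sc: "x \<in> X \<Longrightarrow> scaleC c x \<in> X" using sub unfolding closed_subbimodule_def by blast
lemma X_closed: "closed X" using sub unfolding closed_subbimodule_def by blast
lemma X_lm: "x \<in> X \<Longrightarrow> lm a x \<in> X" using sub unfolding closed_subbimodule_def by blast
lemma X_rm: "x \<in> X \<Longrightarrow> rm x a \<in> X" using sub unfolding closed_subbimodule_def by blast
lemma X_neg: "x \<in> X \<Longrightarrow> - x \<in> X" using X_sc[of x "-1"] by (simp add: scaleC_minus1)
lemma X_diff: "x \<in> X \<Longrightarrow> y \<in> X \<Longrightarrow> x - y \<in> X" using X_add[OF _ X_neg[of y], of x] by simp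
lemma X_sum: "(\<And>i. i \<in> A \<Longrightarrow> f i \<in> X) \<Longrightarrow> sum f A \<in> X"
  by (induction A rule: infinite_finite_induct) (auto intro: X0 X_add)

definition "Kl = (SOME K. \<forall>a y. norm (lm a y) \<le> K * norm a * norm y)"
definition "Kr = (SOME K. \<forall>a y. norm (rm y a) \<le> K * norm a * norm y)"
definition "Kc = \<bar>Kl\<bar> + \<bar>Kr\<bar> + 1"
definition "Md = \<bar>SOME M. \<forall>x. norm (\<delta> x) \<le> M * norm x\<bar>"
definition "C = 2 * (Kc * Md) + 1"

lemma Kc_ge1: "1 \<le> Kc" by (simp add: Kc_def)
lemma Md_ge0: "0 \<le> Md" by (simp add: Md_def)
lemma KM_nonneg: "0 \<le> Kc * Md" using Kc_ge1 Md_ge0 by simp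
lemma C_pos: "0 < C" using KM_nonneg unfolding C_def by linarith

lemma lm_le: "norm (lm a y) \<le> Kc * (norm a * norm y)"
proof -
  have "norm (lm a y) \<le> Kl * norm a * norm y"
    unfolding Kl_def using someI_ex[OF lm_bound] by blast
  also have "\<dots> = Kl * (norm a * norm y)" by simp
  also have "\<dots> \<le> Kc * (norm a * norm y)"
    by (rule mult_right_mono) (auto simp: Kc_def)
  finally show ?thesis .
qed

lemma rm_le: "norm (rm y a) \<le> Kc * (norm a * norm y)"
proof -
  have "norm (rm y a) \<le> Kr * norm a * norm y"
    unfolding Kr_def using someI_ex[OF rm_bound] by blast
  also have "\<dots> = Kr * (norm a * norm y)" by simp
  also have "\<dots> \<le> Kc * (norm a * norm y)"
    by (rule mult_right_mono) (auto simp: Kc_def)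
  finally show ?thesis .
qed

lemma d_le: "norm (\<delta> a) \<le> Md * norm a"
proof -
  have ex: "\<exists>M. \<forall>x. norm (\<delta> x) \<le> M * norm x" using bdd unfolding bounded_map_def .
  have "norm (\<delta> a) \<le> (SOME M. \<forall>x. norm (\<delta> x) \<le> M * norm x) * norm a"
    using someI_ex[OF ex] by blast
  also have "\<dots> \<le> Md * norm a" unfolding Md_def by (rule mult_right_mono) auto
  finally show ?thesis .
qed

definition LU :: "'a \<times> complex \<Rightarrow> 'y \<Rightarrow> 'y" where "LU x v = lm (fst x) v + scaleC (snd x) v"
definition RU :: "'y \<Rightarrow> 'a \<times> complex \<Rightarrow> 'y" where "RU v x = rm v (fst x) + scaleC (snd x) v"
definition DT :: "'a \<times> complex \<Rightarrow> 'y" where "DT x = \<delta> (fst x)"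
definition TH :: "'a \<times> complex \<Rightarrow> 'a \<times> complex \<Rightarrow> 'y" where "TH b c = RU (DT b) c - LU b (DT c)"

lemma LU_addL: "LU (x + y) v = LU x v + LU y v"
  by (simp add: LU_def lm_addL scaleC_add_left algebra_simps)
lemma LU_addR: "LU x (v + w) = LU x v + LU x w"
  by (simp add: LU_def lm_addR scaleC_add_right algebra_simps)
lemma RU_addL: "RU (v + w) x = RU v x + RU w x"
  by (simp add: RU_def rm_addL scaleC_add_right algebra_simps)
lemma RU_addR: "RU v (x + y) = RU v x + RU v y"
  by (simp add: RU_def rm_addR scaleC_add_left algebra_simps)
lemma add_LUL: "Modules.additive (\<lambda>x. LU x v)" by (rule Modules.additive.intro) (rule LU_addL)
lemma add_LUR: "Modules.additive (LU x)" by (rule Modules.additive.intro) (rule LU_addR)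
lemma add_RUL: "Modules.additive (\<lambda>v. RU v x)" by (rule Modules.additive.intro) (rule RU_addL)
lemma add_RUR: "Modules.additive (RU v)" by (rule Modules.additive.intro) (rule RU_addR)
lemma LU_negL: "LU (- x) v = - LU x v" using Modules.additive.minus[OF add_LUL] .
lemma LU_negR: "LU x (- v) = - LU x v" using Modules.additive.minus[OF add_LUR] .
lemma RU_negL: "RU (- v) x = - RU v x" using Modules.additive.minus[OF add_RUL] .
lemma RU_negR: "RU v (- x) = - RU v x" using Modules.additive.minus[OF add_RUR] .
lemma LU_diffL: "LU (x - y) v = LU x v - LU y v" using Modules.additive.diff[OF add_LUL] .
lemma LU_diffR: "LU x (v - w) = LU x v - LU x w" using Modules.additive.diff[OF add_LUR] .
lemma RU_diffL: "RU (v - w) x = RU v x - RU w x" using Modules.additive.diff[OF add_RUL] .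
lemma RU_diffR: "RU v (x - y) = RU v x - RU v y" using Modules.additive.diff[OF add_RUR] .
lemma LU_sumL: "LU (sum f A) v = (\<Sum>i\<in>A. LU (f i) v)" using Modules.additive.sum[OF add_LUL] .
lemma LU_sumR: "LU x (sum f A) = (\<Sum>i\<in>A. LU x (f i))" using Modules.additive.sum[OF add_LUR] .
lemma RU_sumL: "RU (sum f A) x = (\<Sum>i\<in>A. RU (f i) x)" using Modules.additive.sum[OF add_RUL] .
lemma RU_sumR: "RU v (sum f A) = (\<Sum>i\<in>A. RU v (f i))" using Modules.additive.sum[OF add_RUR] .

lemma LU_scL: "LU (us_scale c x) v = scaleC c (LU x v)"
  by (simp add: LU_def us_scale_def lm_scL scaleC_add_right scaleC_scaleC)
lemma LU_scR: "LU x (scaleC c v) = scaleC c (LU x v)"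
  by (simp add: LU_def lm_scR scaleC_add_right scaleC_scaleC mult.commute)
lemma RU_scL: "RU (scaleC c v) x = scaleC c (RU v x)"
  by (simp add: RU_def rm_scL scaleC_add_right scaleC_scaleC mult.commute)
lemma RU_scR: "RU v (us_scale c x) = scaleC c (RU v x)"
  by (simp add: RU_def us_scale_def rm_scR scaleC_add_right scaleC_scaleC)

lemma LU_mult: "LU (us_mult x y) v = LU x (LU y v)"
  by (simp add: LU_def us_mult_def lm_addL lm_scL lm_mult lm_addR lm_scR scaleC_add_right scaleC_scaleC
      algebra_simps)
lemma RU_mult: "RU v (us_mult x y) = RU (RU v x) y"
  by (simp add: RU_def us_mult_def rm_addR rm_scR rm_mult rm_addL rm_scL scaleC_add_right scaleC_scaleC
      algebra_simps)
lemma RU_LU: "RU (LU x v) y = LU x (RU v y)"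
  by (simp add: RU_def LU_def rm_addL rm_scL lr_assoc lm_addR lm_scR scaleC_add_right scaleC_scaleC
      algebra_simps)

lemma LU_one: "LU (0, 1) v = v" by (simp add: LU_def)
lemma RU_one: "RU v (0, 1) = v" by (simp add: RU_def)

lemma X_LU: "v \<in> X \<Longrightarrow> LU x v \<in> X" unfolding LU_def by (intro X_add X_lm X_sc)
lemma X_RU: "v \<in> X \<Longrightarrow> RU v x \<in> X" unfolding RU_def by (intro X_add X_rm X_sc)

lemma LU_le: "norm (LU x v) \<le> Kc * us_norm x * norm v"
proof -
  have 1: "norm (LU x v) \<le> norm (lm (fst x) v) + cmod (snd x) * norm v"
    unfolding LU_def using norm_triangle_ineq[of "lm (fst x) v" "scaleC (snd x) v"] by (simp add: norm_scaleC)
  have 2: "1 * (cmod (snd x) * norm v) \<le> Kc * (cmod (snd x) * norm v)"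
    by (rule mult_right_mono) (auto simp: Kc_ge1)
  have 3: "Kc * us_norm x * norm v = Kc * (norm (fst x) * norm v) + Kc * (cmod (snd x) * norm v)"
    by (simp add: us_norm_def algebra_simps)
  show ?thesis using 1 2 3 lm_le[of "fst x" v] by linarith
qed

lemma RU_le: "norm (RU v x) \<le> Kc * us_norm x * norm v"
proof -
  have 1: "norm (RU v x) \<le> norm (rm v (fst x)) + cmod (snd x) * norm v"
    unfolding RU_def using norm_triangle_ineq[of "rm v (fst x)" "scaleC (snd x) v"] by (simp add: norm_scaleC)
  have 2: "1 * (cmod (snd x) * norm v) \<le> Kc * (cmod (snd x) * norm v)"
    by (rule mult_right_mono) (auto simp: Kc_ge1)
  have 3: "Kc * us_norm x * norm v = Kc * (norm (fst x) * norm v) + Kc * (cmod (snd x) * norm v)"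
    by (simp add: us_norm_def algebra_simps)
  show ?thesis using 1 2 3 rm_le[of v "fst x"] by linarith
qed

lemma DT_le: "norm (DT x) \<le> Md * us_norm x"
proof -
  have "Md * norm (fst x) \<le> Md * us_norm x"
    by (rule mult_left_mono) (auto simp: us_norm_def Md_ge0)
  then show ?thesis using d_le[of "fst x"] unfolding DT_def by linarith
qed

lemma DT_add: "DT (x + y) = DT x + DT y" by (simp add: DT_def d_add)
lemma DT_neg: "DT (- x) = - DT x" by (simp add: DT_def d_neg)
lemma DT_sc: "DT (us_scale c x) = scaleC c (DT x)" by (simp add: DT_def us_scale_def d_sc)
lemma DT_mult: "DT (us_mult x y) = RU (DT x) y + LU x (DT y)"
  by (simp add: DT_def us_mult_def RU_def LU_def d_add d_sc d_mult algebra_simps)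

lemma TH_comm: "TH (us_mult a b) c + TH (- b) (us_mult c a)
   = RU (DT a) (us_mult b c) + LU (us_mult b c) (DT a) + LU a (TH b c) - RU (TH b c) a"
  by (simp add: TH_def DT_mult DT_neg LU_mult RU_mult RU_LU LU_addR LU_addL RU_addL RU_addR LU_negL LU_negR
      RU_negL RU_negR LU_diffR RU_diffL algebra_simps)

lemma cent_X: "LU x (DT y) - RU (DT y) x \<in> X"
proof -
  define s where "s = \<delta> (fst y) + \<tau> (fst y)"
  have s: "s \<in> X" using sumX by (simp add: s_def)
  have d: "DT y = s - \<tau> (fst y)" by (simp add: s_def DT_def)
  have c: "LU x (\<tau> (fst y)) = RU (\<tau> (fst y)) x" by (simp add: LU_def RU_def t_cent)
  have "LU x (DT y) - RU (DT y) x = LU x s - RU s x"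
    by (simp add: d LU_diffR RU_diffL c)
  then show ?thesis using X_diff[OF X_LU[OF s] X_RU[OF s]] by simp
qed

lemma TH_flip: "TH (- c) b - TH b c \<in> X"
proof -
  have "TH (- c) b - TH b c = (LU c (DT b) - RU (DT b) c) + (LU b (DT c) - RU (DT c) b)"
    by (simp add: TH_def DT_neg RU_negL LU_negL algebra_simps)
  then show ?thesis using X_add[OF cent_X cent_X] by simp
qed

lemma TH_addL: "TH (x + y) c = TH x c + TH y c"
  by (simp add: TH_def DT_add RU_addL LU_addL algebra_simps)
lemma TH_addR: "TH b (x + y) = TH b x + TH b y"
  by (simp add: TH_def DT_add RU_addR LU_addR algebra_simps)
lemma TH_scL: "TH (us_scale k x) c = scaleC k (TH x c)"
  by (simp add: TH_def DT_sc RU_scL LU_scL scaleC_diff_right)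
lemma TH_scR: "TH b (us_scale k x) = scaleC k (TH b x)"
  by (simp add: TH_def DT_sc RU_scR LU_scR scaleC_diff_right)

lemma TH_le: "norm (TH b c) \<le> C * (us_norm b * us_norm c)"
proof -
  have nb: "0 \<le> us_norm b" and nc: "0 \<le> us_norm c" by (auto simp: us_norm_nonneg)
  have "norm (RU (DT b) c) \<le> Kc * us_norm c * norm (DT b)" by (rule RU_le)
  also have "\<dots> \<le> Kc * us_norm c * (Md * us_norm b)"
    by (rule mult_left_mono[OF DT_le]) (use Kc_ge1 nc in auto)
  finally have 1: "norm (RU (DT b) c) \<le> Kc * Md * (us_norm b * us_norm c)" by (simp add: algebra_simps)
  have "norm (LU b (DT c)) \<le> Kc * us_norm b * norm (DT c)" by (rule LU_le)
  also have "\<dots> \<le> Kc * us_norm b * (Md * us_norm c)"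
    by (rule mult_left_mono[OF DT_le]) (use Kc_ge1 nb in auto)
  finally have 2: "norm (LU b (DT c)) \<le> Kc * Md * (us_norm b * us_norm c)" by (simp add: algebra_simps)
  have 3: "norm (TH b c) \<le> norm (RU (DT b) c) + norm (LU b (DT c))"
    unfolding TH_def by (rule norm_triangle_ineq4)
  have 4: "0 \<le> us_norm b * us_norm c" using nb nc by simp
  have "C * (us_norm b * us_norm c) = 2 * (Kc * Md * (us_norm b * us_norm c)) + us_norm b * us_norm c"
    by (simp add: C_def algebra_simps)
  then show ?thesis using 1 2 3 4 by linarith
qed

lemma TH_tens:
  assumes "us_tens_eq xs ys"
  shows "tval TH xs = tval TH ys"
proof (rule ccontr)
  assume "tval TH xs \<noteq> tval TH ys"
  then have "tval TH xs - tval TH ys \<noteq> 0" by simp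
  from exists_functional[OF this] obtain l :: "'y \<Rightarrow> complex" where
    la: "\<And>x y. l (x + y) = l x + l y" and ls: "\<And>c x. l (scaleC c x) = c * l x"
    and l1: "l (tval TH xs - tval TH ys) = 1" by blast
  interpret l: additive l by (rule Modules.additive.intro) (rule la)
  define \<phi> where "\<phi> b c = l (TH b c)" for b c
  have bil: "us_cbilinear \<phi>"
    unfolding us_cbilinear_def \<phi>_def by (simp add: TH_addL TH_addR TH_scL TH_scR la ls)
  have lt: "l (tval TH zs) = tval \<phi> zs" for zs
    by (induction zs) (simp_all add: l.zero la \<phi>_def)
  have "tval \<phi> xs = tval \<phi> ys" using assms bil by (simp add: tens_eq_iff)
  then have "l (tval TH xs - tval TH ys) = 0" by (simp add: l.diff lt)
  with l1 show False by simp
qed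

lemma TH_tS: "norm (tval TH ys) \<le> C * tS ys"
proof (induction ys)
  case Nil then show ?case by (simp add: tS_def)
next
  case (Cons y ys)
  have "norm (tval TH (y # ys)) \<le> norm (TH (fst y) (snd y)) + norm (tval TH ys)"
    by (simp add: norm_triangle_ineq)
  also have "\<dots> \<le> C * (us_norm (fst y) * us_norm (snd y)) + C * tS ys"
    using TH_le Cons by (rule add_mono)
  also have "\<dots> = C * tS (y # ys)" by (simp add: tS_def algebra_simps)
  finally show ?case .
qed

lemma TH_pn: "norm (tval TH xs) \<le> C * us_pnorm_fin xs"
proof -
  have "norm (tval TH xs) / C \<le> us_pnorm_fin xs"
  proof (rule pn_greatest)
    fix ys assume "us_tens_eq xs ys"
    then have "norm (tval TH xs) \<le> C * tS ys" using TH_tens TH_tS by metis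
    then show "norm (tval TH xs) / C \<le> tS ys" using C_pos by (simp add: divide_le_eq mult.commute)
  qed
  then show ?thesis using C_pos by (simp add: divide_le_eq mult.commute)
qed


lemma RU_lipR: "norm (RU v x - RU v y) \<le> (Kc * 2 * norm v) * norm (x - y)"
proof -
  have "norm (RU v x - RU v y) = norm (RU v (x - y))" by (simp only: RU_diffR)
  also have "\<dots> \<le> Kc * us_norm (x - y) * norm v" by (rule RU_le)
  also have "\<dots> \<le> Kc * (2 * norm (x - y)) * norm v"
    by (intro mult_right_mono mult_left_mono us_norm_le) (use Kc_ge1 in auto)
  also have "\<dots> = (Kc * 2 * norm v) * norm (x - y)" by (simp add: algebra_simps)
  finally show ?thesis .
qed

lemma LU_lipL: "norm (LU x v - LU y v) \<le> (Kc * 2 * norm v) * norm (x - y)"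
proof -
  have "norm (LU x v - LU y v) = norm (LU (x - y) v)" by (simp only: LU_diffL)
  also have "\<dots> \<le> Kc * us_norm (x - y) * norm v" by (rule LU_le)
  also have "\<dots> \<le> Kc * (2 * norm (x - y)) * norm v"
    by (intro mult_right_mono mult_left_mono us_norm_le) (use Kc_ge1 in auto)
  also have "\<dots> = (Kc * 2 * norm v) * norm (x - y)" by (simp add: algebra_simps)
  finally show ?thesis .
qed

lemma LU_lipR: "norm (LU x v - LU x w) \<le> (Kc * us_norm x) * norm (v - w)"
proof -
  have "norm (LU x v - LU x w) = norm (LU x (v - w))" by (simp only: LU_diffR)
  also have "\<dots> \<le> Kc * us_norm x * norm (v - w)" by (rule LU_le)
  finally show ?thesis .
qed

lemma RU_lipL: "norm (RU v x - RU w x) \<le> (Kc * us_norm x) * norm (v - w)"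
proof -
  have "norm (RU v x - RU w x) = norm (RU (v - w) x)" by (simp only: RU_diffL)
  also have "\<dots> \<le> Kc * us_norm x * norm (v - w)" by (rule RU_le)
  finally show ?thesis .
qed

definition THs :: "(nat \<Rightarrow> ('a \<times> complex) \<times> ('a \<times> complex)) \<Rightarrow> nat \<Rightarrow> 'y" where
  "THs t n = TH (fst (t n)) (snd (t n))"
definition wt :: "(nat \<Rightarrow> ('a \<times> complex) \<times> ('a \<times> complex)) \<Rightarrow> nat \<Rightarrow> real" where
  "wt t n = us_norm (fst (t n)) * us_norm (snd (t n))"
definition Pm :: "(nat \<Rightarrow> ('a \<times> complex) \<times> ('a \<times> complex)) \<Rightarrow> nat \<Rightarrow> 'a \<times> complex" where
  "Pm t n = us_mult (fst (t n)) (snd (t n))"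
definition Th :: "(nat \<Rightarrow> ('a \<times> complex) \<times> ('a \<times> complex)) \<Rightarrow> 'y" where
  "Th t = suminf (THs t)"

lemma wt_sum: "us_tensor_rep t \<Longrightarrow> summable (wt t)"
  unfolding us_tensor_rep_def wt_def[abs_def] .

lemma THs_sum: "us_tensor_rep t \<Longrightarrow> summable (THs t)"
proof -
  assume r: "us_tensor_rep t"
  have "summable (\<lambda>n. C * wt t n)" using summable_mult[OF wt_sum[OF r]] .
  then show ?thesis by (rule my_comparison) (unfold THs_def wt_def, rule TH_le)
qed

lemma Pm_sum: "us_tensor_rep t \<Longrightarrow> summable (Pm t)"
proof -
  assume r: "us_tensor_rep t"
  show ?thesis using wt_sum[OF r]
    by (rule my_comparison) (unfold Pm_def wt_def, rule order_trans[OF norm_le_us_norm us_norm_mult])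
qed

lemma pi_eq: "us_pi t = suminf (Pm t)"
  by (simp add: us_pi_def Pm_def[abs_def])

lemma Th_flipsum:
  assumes r: "us_tensor_rep t" and s: "us_symmetric t"
  shows "Th t \<in> X"
proof -
  define LF where "LF N = us_partial t N @ map (\<lambda>(b, c). (- c, b)) (us_partial t N)" for N
  define g where "g n = [t n, (- snd (t n), fst (t n))]" for n
  have LFg: "tval h (LF N) = (\<Sum>n<N. tval h (g n))" for h :: "_ \<Rightarrow> _ \<Rightarrow> 'z::comm_monoid_add" and N
  proof -
    have LFe: "LF N = map (\<lambda>x. x) (us_partial t N) @ map (\<lambda>(b, c). (- c, b)) (us_partial t N)" by (simp add: LF_def)
    show ?thesis unfolding LFe tval_two_maps g_def by (simp add: split_beta)
  qed
  have "tS (g n) = 2 * wt t n" for n by (simp add: g_def tS_def wt_def algebra_simps)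
  then have sumg: "summable (\<lambda>n. tS (g n))" using summable_mult[OF wt_sum[OF r], of 2] by simp
  have conv: "convergent (\<lambda>N. us_pnorm_fin (LF N))" by (rule pn_convergent[OF LFg sumg])
  have "us_flip_norm t = lim (\<lambda>N. us_pnorm_fin (LF N))"
    by (simp add: us_flip_norm_def us_pnorm_lim_def LF_def)
  then have lim0: "(\<lambda>N. us_pnorm_fin (LF N)) \<longlonglongrightarrow> 0"
    using conv s unfolding us_symmetric_def convergent_LIMSEQ_iff by simp
  define ThN where "ThN = (\<lambda>N. \<Sum>n<N. THs t n)"
  define Xi where "Xi N = (\<Sum>n<N. TH (- snd (t n)) (fst (t n)) - THs t n)" for N
  have XiX: "Xi N \<in> X" for N unfolding Xi_def THs_def by (rule X_sum) (rule TH_flip)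
  have gn: "tval TH (g n) = THs t n + THs t n + (TH (- snd (t n)) (fst (t n)) - THs t n)" for n
    by (simp add: g_def THs_def)
  have eqT: "tval TH (LF N) = ThN N + ThN N + Xi N" for N
    by (simp only: LFg gn sum.distrib ThN_def Xi_def)
  define u where "u N = - scaleC (1/2) (Xi N)" for N
  have uX: "u N \<in> X" for N unfolding u_def by (intro X_neg X_sc XiX)
  have du: "ThN N - u N = scaleC (1/2) (tval TH (LF N))" for N
  proof -
    have "scaleC (1/2) (tval TH (LF N)) = ThN N + scaleC (1/2) (Xi N)"
      by (simp only: eqT scaleC_add_right[of _ "ThN N + ThN N"] scaleC_half)
    then show ?thesis by (simp add: u_def)
  qed
  have nb: "norm (ThN N - u N) \<le> 1/2 * (C * us_pnorm_fin (LF N))" for N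
  proof -
    have "norm (ThN N - u N) = 1/2 * norm (tval TH (LF N))" by (simp add: du norm_scaleC)
    then show ?thesis using TH_pn[of "LF N"] by simp
  qed
  have b0: "(\<lambda>N. 1/2 * (C * us_pnorm_fin (LF N))) \<longlonglongrightarrow> 0"
    using tendsto_mult[OF tendsto_const tendsto_mult[OF tendsto_const lim0, of C], of "1/2"]
    by (simp only: mult_zero_right)
  have t1: "(\<lambda>N. ThN N - u N) \<longlonglongrightarrow> 0"
    by (rule Lim_null_comparison[OF always_eventually b0]) (intro allI nb)
  have t2: "ThN \<longlonglongrightarrow> Th t"
    unfolding ThN_def Th_def by (rule summable_LIMSEQ[OF THs_sum[OF r]])
  have "(\<lambda>N. ThN N - (ThN N - u N)) \<longlonglongrightarrow> Th t - 0" by (rule tendsto_diff[OF t2 t1])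
  then have "u \<longlonglongrightarrow> Th t" by simp
  then show ?thesis
    by (rule Lim_in_closed_set[OF X_closed always_eventually trivial_limit_sequentially, rotated]) (intro allI uX)
qed

lemma Th_commsum:
  assumes r: "us_tensor_rep t"
  shows "norm (RU (DT a) (us_pi t) + LU (us_pi t) (DT a) + LU a (Th t) - RU (Th t) a) \<le> C * us_comm_norm a t"
proof -
  define LC where "LC N = map (\<lambda>(b, c). (us_mult a b, c)) (us_partial t N) @ map (\<lambda>(b, c). (- b, us_mult c a)) (us_partial t N)" for N
  define g where "g n = [(us_mult a (fst (t n)), snd (t n)), (- fst (t n), us_mult (snd (t n)) a)]" for n
  have LCg: "tval h (LC N) = (\<Sum>n<N. tval h (g n))" for h :: "_ \<Rightarrow> _ \<Rightarrow> 'z::comm_monoid_add" and N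
    unfolding LC_def tval_two_maps g_def by (simp add: split_beta)
  have tSg: "norm (tS (g n)) \<le> 2 * us_norm a * wt t n" for n
  proof -
    have e: "tS (g n) = us_norm (us_mult a (fst (t n))) * us_norm (snd (t n)) + us_norm (fst (t n)) * us_norm (us_mult (snd (t n)) a)"
      by (simp add: g_def tS_def)
    have 1: "us_norm (us_mult a (fst (t n))) * us_norm (snd (t n)) \<le> (us_norm a * us_norm (fst (t n))) * us_norm (snd (t n))"
      by (rule mult_right_mono[OF us_norm_mult us_norm_nonneg])
    have 2: "us_norm (fst (t n)) * us_norm (us_mult (snd (t n)) a) \<le> us_norm (fst (t n)) * (us_norm (snd (t n)) * us_norm a)"
      by (rule mult_left_mono[OF us_norm_mult us_norm_nonneg])
    have 3: "2 * us_norm a * wt t n = (us_norm a * us_norm (fst (t n))) * us_norm (snd (t n)) + us_norm (fst (t n)) * (us_norm (snd (t n)) * us_norm a)"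
      by (simp add: wt_def algebra_simps)
    have 4: "norm (tS (g n)) = tS (g n)" using tS_nonneg[of "g n"] by simp
    show ?thesis using 1 2 3 4 e by linarith
  qed
  have sumg: "summable (\<lambda>n. tS (g n))"
    using summable_mult[OF wt_sum[OF r], of "2 * us_norm a"]
    by (rule my_comparison) (rule tSg)
  have conv: "convergent (\<lambda>N. us_pnorm_fin (LC N))" by (rule pn_convergent[OF LCg sumg])
  have "us_comm_norm a t = lim (\<lambda>N. us_pnorm_fin (LC N))"
    by (simp add: us_comm_norm_def us_pnorm_lim_def LC_def)
  then have limc: "(\<lambda>N. us_pnorm_fin (LC N)) \<longlonglongrightarrow> us_comm_norm a t"
    using conv unfolding convergent_LIMSEQ_iff by simp
  define PN where "PN = (\<lambda>N. \<Sum>n<N. Pm t n)"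
  define ThN where "ThN = (\<lambda>N. \<Sum>n<N. THs t n)"
  have gn: "tval TH (g n) = RU (DT a) (Pm t n) + LU (Pm t n) (DT a) + LU a (THs t n) - RU (THs t n) a" for n
    unfolding g_def by (simp only: tval_Cons tval_Nil fst_conv snd_conv add_0_right TH_comm Pm_def THs_def)
  have eqT: "tval TH (LC N) = RU (DT a) (PN N) + LU (PN N) (DT a) + LU a (ThN N) - RU (ThN N) a" for N
    by (simp only: LCg gn PN_def ThN_def sum.distrib sum_subtractf RU_sumR LU_sumL LU_sumR RU_sumL)
  have PNt: "PN \<longlonglongrightarrow> us_pi t"
    unfolding PN_def pi_eq by (rule summable_LIMSEQ[OF Pm_sum[OF r]])
  have ThNt: "ThN \<longlonglongrightarrow> Th t"
    unfolding ThN_def Th_def by (rule summable_LIMSEQ[OF THs_sum[OF r]])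
  have l1: "(\<lambda>N. RU (DT a) (PN N)) \<longlonglongrightarrow> RU (DT a) (us_pi t)" by (rule lip_tendsto[OF RU_lipR PNt])
  have l2: "(\<lambda>N. LU (PN N) (DT a)) \<longlonglongrightarrow> LU (us_pi t) (DT a)" by (rule lip_tendsto[OF LU_lipL PNt])
  have l3: "(\<lambda>N. LU a (ThN N)) \<longlonglongrightarrow> LU a (Th t)" by (rule lip_tendsto[OF LU_lipR ThNt])
  have l4: "(\<lambda>N. RU (ThN N) a) \<longlonglongrightarrow> RU (Th t) a" by (rule lip_tendsto[OF RU_lipL ThNt])
  have Vt: "(\<lambda>N. norm (tval TH (LC N))) \<longlonglongrightarrow> norm (RU (DT a) (us_pi t) + LU (us_pi t) (DT a) + LU a (Th t) - RU (Th t) a)"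
    unfolding eqT by (intro tendsto_norm tendsto_diff tendsto_add l1 l2 l3 l4)
  have Ct: "(\<lambda>N. C * us_pnorm_fin (LC N)) \<longlonglongrightarrow> C * us_comm_norm a t"
    by (rule tendsto_mult[OF tendsto_const limc])
  show ?thesis
    by (rule tendsto_le[OF trivial_limit_sequentially Ct Vt]) (intro always_eventually allI TH_pn)
qed

lemma main_d:
  fixes t :: "'i \<Rightarrow> nat \<Rightarrow> ('a \<times> complex) \<times> ('a \<times> complex)" and F :: "'i filter"
  assumes spa: "us_sym_approx_diag F t"
  shows "\<delta> a0 \<in> X"
proof -
  have Fnb: "F \<noteq> bot" and rep: "\<And>i. us_tensor_rep (t i)" and sym: "\<And>i. us_symmetric (t i)"
    and comm: "\<And>a. ((\<lambda>i. us_comm_norm a (t i)) \<longlongrightarrow> 0) F"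
    and unit: "\<And>a. ((\<lambda>i. us_norm (us_mult (us_pi (t i)) a - a)) \<longlongrightarrow> 0) F"
    using spa unfolding us_sym_approx_diag_def by blast+
  define a where "a = (a0, 0::complex)"
  define uu where "uu = (0::'a, 1::complex)"
  have mone: "us_mult p uu = p" for p by (simp add: us_mult_def uu_def)
  have "((\<lambda>i. us_norm (us_pi (t i) - uu)) \<longlongrightarrow> 0) F" using unit[of uu] by (simp only: mone)
  then have "((\<lambda>i. us_pi (t i) - uu) \<longlongrightarrow> 0) F"
    by (rule Lim_null_comparison[OF always_eventually, rotated]) (intro allI norm_le_us_norm)
  then have pi1: "((\<lambda>i. us_pi (t i)) \<longlongrightarrow> uu) F" by (rule Lim_null[THEN iffD2])
  define W where "W i = RU (DT a) (us_pi (t i)) + LU (us_pi (t i)) (DT a)" for i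
  define z where "z i = - (LU a (Th (t i)) - RU (Th (t i)) a)" for i
  have zX: "z i \<in> X" for i
  proof -
    have "Th (t i) \<in> X" by (rule Th_flipsum[OF rep sym])
    then show ?thesis unfolding z_def by (intro X_neg X_diff X_LU X_RU)
  qed
  have w1: "((\<lambda>i. RU (DT a) (us_pi (t i))) \<longlongrightarrow> RU (DT a) uu) F" by (rule lip_tendsto[OF RU_lipR pi1])
  have w2: "((\<lambda>i. LU (us_pi (t i)) (DT a)) \<longlongrightarrow> LU uu (DT a)) F" by (rule lip_tendsto[OF LU_lipL pi1])
  have Wt: "(W \<longlongrightarrow> DT a + DT a) F"
    using tendsto_add[OF w1 w2] unfolding W_def uu_def RU_one LU_one .
  have eqWz: "W i - z i = RU (DT a) (us_pi (t i)) + LU (us_pi (t i)) (DT a) + LU a (Th (t i)) - RU (Th (t i)) a" for i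
    by (simp add: W_def z_def algebra_simps)
  have bC: "((\<lambda>i. C * us_comm_norm a (t i)) \<longlongrightarrow> 0) F"
    using tendsto_mult[OF tendsto_const comm[of a], of C] by (simp only: mult_zero_right)
  have Wz: "((\<lambda>i. W i - z i) \<longlongrightarrow> 0) F"
    by (rule Lim_null_comparison[OF always_eventually bC]) (unfold eqWz, intro allI Th_commsum rep)
  have "((\<lambda>i. W i - (W i - z i)) \<longlongrightarrow> (DT a + DT a) - 0) F" by (rule tendsto_diff[OF Wt Wz])
  then have zt: "(z \<longlongrightarrow> DT a + DT a) F" by simp
  have "DT a + DT a \<in> X"
    by (rule Lim_in_closed_set[OF X_closed always_eventually Fnb zt]) (intro allI zX)
  then have "scaleC (1/2) (DT a + DT a) \<in> X" by (rule X_sc)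
  then show ?thesis by (simp only: scaleC_half a_def DT_def fst_conv)
qed

end

theorem lemma6p3:
  fixes lm :: "'a::{cnormed_algebra, complete_space} \<Rightarrow> 'y::{cnormed, complete_space} \<Rightarrow> 'y"
    and rm :: "'y \<Rightarrow> 'a \<Rightarrow> 'y"
    and X :: "'y set"
    and \<delta> \<tau> :: "'a \<Rightarrow> 'y"
    and F :: "'i filter"
    and t :: "'i \<Rightarrow> nat \<Rightarrow> ('a \<times> complex) \<times> ('a \<times> complex)"
  assumes spa: "us_sym_approx_diag F t"
    and bimod: "banach_bimodule lm rm"
    and sub: "closed_subbimodule lm rm X"
    and der: "derivation lm rm \<delta>" and bdd: "bounded_map \<delta>"
    and lin: "clinear_map \<tau>" and cent: "\<forall>a. \<tau> a \<in> zcenter lm rm UNIV"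
    and sumX: "\<forall>a. \<delta> a + \<tau> a \<in> X"
  shows "(\<forall>a. \<delta> a \<in> X) \<and> (\<forall>a. \<tau> a \<in> zcenter lm rm X)"
proof -
  interpret L6 lm rm X \<delta> \<tau>
    using bimod sub der bdd lin cent sumX by (rule L6.intro)
  have d: "\<delta> a \<in> X" for a by (rule main_d[OF spa])
  have tX: "\<tau> a \<in> X" for a
  proof -
    have "(\<delta> a + \<tau> a) - \<delta> a \<in> X" using X_diff[OF sumX[rule_format] d] .
    then show ?thesis by simp
  qed
  have "\<tau> a \<in> zcenter lm rm X" for a
    unfolding zcenter_def using tX t_cent by simp
  then show ?thesis using d by blast
qed

end
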